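(* Consider the contextual bandit setting below run for $T$ iterations with $N$ arms and $d$-dimensional contexts. Let $E_T$ be the event that the policy population reaches the $\delta$-target within $T$ iterations, with $\Pr(E_T)=1-\epsilon_{\delta,T}$. Suppose there is a contextual bandit algorithm and a constant $C>0$ such that for every $\eta_1\in(0,1)$, with probability at least $1-\eta_1$ its $T$-regret satisfies $R_T\le C\sqrt{Td\,\ln^3\!\big(NT\ln(T)/\eta_1\big)}$, and that this event is independent of $E_T$. Then for every $\eta$ with $\epsilon_{\delta,T}<\eta<1$, with probability at least $1-\eta$ the $\delta$-target is reached within $T$ iterations and $$R_T\le C\sqrt{Td\,\ln^3\!\Big(\frac{NT\ln(T)\,(1-\epsilon_{\delta,T})}{\eta-\epsilon_{\delta,T}}\Big)},$$ i.e. the regret of bandit selection is $O\Big(\sqrt{Td\ln^3\big(\frac{NT\ln(T)(1-\epsilon_{\delta,T})}{\eta-\epsilon_{\delta,T}}\big)}\Big)$ with probability $1-\eta$.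
   Context: Contextual bandit setting: there is a set $\mathcal{A}$ of $N$ arms (here, the $N$ policies of a diversity RL population; selecting an arm means choosing that policy to update). At each iteration $t=1,\dots,T$ one observes feature vectors $x_{t,a}\in\mathbb{R}^d$ with $\|x_{t,a}\|_2\le 1$ for each $a\in\mathcal{A}$, the algorithm chooses an arm $a_t$ and receives reward $r_{t,a_t}\in[0,1]$ (the change in population diversity caused by the update). Linear realizability: there is an unknown $\theta^*\in\mathbb{R}^d$ with $\|\theta^*\|_2\le1$ such that $\mathbb{E}[r_{t,a}\mid x_{t,a}]=x_{t,a}^T\theta^*$ for all $t,a$. The $T$-regret is $R_T=\mathbb{E}[\sum_{t=1}^T r_{t,a_t^*}]-\mathbb{E}[\sum_{t=1}^T r_{t,a_t}]$, where $a_t^*$ is the arm with maximal expected reward at iteration $t$. For a diversity matrix $U$ with $U_{ij}=Div(\pi^i,\pi^j)$ and a population-diversity function $f$, the population reaches the $\delta$-target when $f(U)>\delta$. The number $\epsilon_{\delta,T}$ satisfies $\epsilon_{\delta,T}\to0$ as $T\to\infty$, so $\eta-\epsilon_{\delta,T}\to\eta>0$. *)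

theory Defs
  imports "HOL-Probability.Probability"
begin

definition regret_bound :: "real \<Rightarrow> nat \<Rightarrow> nat \<Rightarrow> nat \<Rightarrow> real \<Rightarrow> real" where
  "regret_bound C T d N x =
     C * sqrt (real T * real d * (ln (real N * real T * ln (real T) / x)) ^ 3)"

text \<open>Event that the population reaches the delta-target within T iterations:
  U t w is the diversity matrix (U_ij = Div(pi^i, pi^j)) after iteration t on outcome w,
  f the population-diversity function.\<close>
definition reach_target ::
  "(nat \<Rightarrow> 'a \<Rightarrow> (nat \<Rightarrow> nat \<Rightarrow> real)) \<Rightarrow> ((nat \<Rightarrow> nat \<Rightarrow> real) \<Rightarrow> real) \<Rightarrow> real \<Rightarrow> nat \<Rightarrow> 'a set" where
  "reach_target U f \<delta> T = {w. \<exists>t\<in>{1..T}. f (U t w) > \<delta>}"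

end

theory Submission
  imports Defs
begin

lemma indep_event_mult:
  assumes "prob_space M" "prob_space.indep_event M A B"
  shows "measure M (A \<inter> B) = measure M A * measure M B"
proof -
  interpret prob_space M by fact
  have "indep_events (case_bool A B) UNIV" using assms(2) by (simp add: indep_event_def)
  then have "prob (\<Inter>i\<in>UNIV. case_bool A B i) = (\<Prod>i\<in>UNIV. prob (case_bool A B i))"
  proof -
    have "\<forall>J\<subseteq>(UNIV::bool set). J \<noteq> {} \<longrightarrow> finite J \<longrightarrow>
       prob (\<Inter>j\<in>J. case_bool A B j) = (\<Prod>j\<in>J. prob (case_bool A B j))"
      using \<open>indep_events (case_bool A B) UNIV\<close>[unfolded indep_events_def] by (rule conjunct2)
    then show ?thesis by simp
  qed
  moreover have "(\<Inter>i\<in>UNIV. case_bool A B i) = A \<inter> B" by (auto simp: UNIV_bool)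
  moreover have "(\<Prod>i\<in>UNIV. prob (case_bool A B i)) = prob A * prob B" by (simp add: UNIV_bool)
  ultimately show ?thesis by simp
qed

theorem theorem7:
  fixes M :: "'a measure"
    and U :: "nat \<Rightarrow> 'a \<Rightarrow> (nat \<Rightarrow> nat \<Rightarrow> real)"
    and f :: "(nat \<Rightarrow> nat \<Rightarrow> real) \<Rightarrow> real"
    and \<delta> :: real and T N d :: nat
    and R :: "'a \<Rightarrow> real" \<comment> \<open>the T-regret of the bandit algorithm\<close>
    and C \<epsilon> \<eta> :: real
  assumes "prob_space M"
    and E_ev: "space M \<inter> reach_target U f \<delta> T \<in> sets M"
    and eps: "\<epsilon> = 1 - measure M (space M \<inter> reach_target U f \<delta> T)"
    and C_pos: "C > 0"
    and regret: "\<And>\<eta>1. 0 < \<eta>1 \<Longrightarrow> \<eta>1 < 1 \<Longrightarrow>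
        {w \<in> space M. R w \<le> regret_bound C T d N \<eta>1} \<in> sets M \<and>
        measure M {w \<in> space M. R w \<le> regret_bound C T d N \<eta>1} \<ge> 1 - \<eta>1 \<and>
        prob_space.indep_event M {w \<in> space M. R w \<le> regret_bound C T d N \<eta>1}
                                 (space M \<inter> reach_target U f \<delta> T)"
    and eta: "\<epsilon> < \<eta>" "\<eta> < 1"
  shows "measure M {w \<in> space M. w \<in> reach_target U f \<delta> T \<and>
            R w \<le> C * sqrt (real T * real d *
              (ln (real N * real T * ln (real T) * (1 - \<epsilon>) / (\<eta> - \<epsilon>))) ^ 3)}
         \<ge> 1 - \<eta>"
proof -
  interpret prob_space M by fact
  define E where "E = space M \<inter> reach_target U f \<delta> T"
  have pE: "prob E = 1 - \<epsilon>" using eps E_def by simp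
  have "prob E \<le> 1" by simp
  then have e0: "\<epsilon> \<ge> 0" using pE by simp
  define \<eta>1 where "\<eta>1 = (\<eta> - \<epsilon>) / (1 - \<epsilon>)"
  have p1: "1 - \<epsilon> > 0" "\<eta> - \<epsilon> > 0" using eta by auto
  have h1: "0 < \<eta>1" "\<eta>1 < 1" using p1 eta unfolding \<eta>1_def
    by (simp_all add: pos_divide_less_eq)
  define A where "A = {w \<in> space M. R w \<le> regret_bound C T d N \<eta>1}"
  have r: "prob A \<ge> 1 - \<eta>1" "indep_event A E"
    using regret[OF h1] A_def E_def by auto
  have rb: "regret_bound C T d N \<eta>1 = C * sqrt (real T * real d *
              (ln (real N * real T * ln (real T) * (1 - \<epsilon>) / (\<eta> - \<epsilon>))) ^ 3)"
    unfolding regret_bound_def \<eta>1_def by (simp only: divide_divide_eq_right)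
  have set: "{w \<in> space M. w \<in> reach_target U f \<delta> T \<and>
            R w \<le> C * sqrt (real T * real d *
              (ln (real N * real T * ln (real T) * (1 - \<epsilon>) / (\<eta> - \<epsilon>))) ^ 3)} = A \<inter> E"
    unfolding A_def E_def rb by blast
  have "prob (A \<inter> E) = prob A * prob E"
    using indep_event_mult[OF \<open>prob_space M\<close> r(2)] by simp
  also have "\<dots> \<ge> (1 - \<eta>1) * (1 - \<epsilon>)"
    using mult_right_mono[OF r(1), of "prob E"] pE eta by simp
  finally have "prob (A \<inter> E) \<ge> (1 - \<eta>1) * (1 - \<epsilon>)" .
  moreover have "(1 - \<eta>1) * (1 - \<epsilon>) = 1 - \<eta>" using p1
    unfolding \<eta>1_def by (simp add: field_simps)
  ultimately have "1 - \<eta> \<le> prob (A \<inter> E)" by linarith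
  then show ?thesis unfolding set .
qed

end
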